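(* Let $G$ be a (not necessarily connected) graph on $n\ge1$ vertices with adjacency matrix $A$, let $m\ge1$, and let $\alpha\in\mathrm{ev}(A)\setminus\{0,-m,-2m\}$. Then there exist $\mu\in\mathbb{R}$, $f\in\mathbb{R}^m$, $g\in\mathbb{R}^n$ with \[ (J_m+\alpha I)f=\tfrac{\mu}{2}\mathbf 1,\quad (A-J_n-\alpha I)g=-\tfrac{\mu}{2}\mathbf 1,\quad \langle f,f\rangle+\langle g,g\rangle=1,\quad \langle\mathbf 1,f\rangle+\langle\mathbf 1,g\rangle=0 \] if and only if there is a vector $g\in\mathbb{R}^n$ with $Ag=\alpha g$, $\langle g,g\rangle=1$ and $\langle\mathbf 1,g\rangle=0$.
   Context: $\mathrm{ev}(A)$ is the set of eigenvalues of $A$; $J_k$ the $k\times k$ all-ones matrix; $\mathbf 1$ the all-ones vector of the appropriate size; $I$ the identity. *)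

theory Defs
  imports "HOL-Analysis.Analysis"
begin

definition is_adjacency_matrix :: "real^'n^'n \<Rightarrow> bool" where
  "is_adjacency_matrix A \<longleftrightarrow>
     (\<forall>i j. A $ i $ j = A $ j $ i) \<and>
     (\<forall>i j. A $ i $ j = 0 \<or> A $ i $ j = 1) \<and>
     (\<forall>i. A $ i $ i = 0)"

definition ev :: "real^'n^'n \<Rightarrow> real set" where
  "ev A = {a. \<exists>v::real^'n. v \<noteq> 0 \<and> A *v v = a *\<^sub>R v}"

definition J :: "real^'n^'n" where
  "J = (\<chi> i j. 1)"

definition ones :: "real^'n" where
  "ones = (\<chi> i. 1)"

end

theory Submission
  imports Defs
begin

lemma J_mult: "(J::real^'m^'m) *v f = (ones \<bullet> f) *\<^sub>R ones"
  by (simp add: vec_eq_iff J_def ones_def matrix_vector_mult_def inner_vec_def)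

lemma ones_ones: "(ones::real^'m) \<bullet> ones = real CARD('m)"
  by (simp add: ones_def inner_vec_def)

lemma ones_inner: "(ones::real^'m) \<bullet> (c *\<^sub>R ones) = c * real CARD('m)"
  by (simp add: ones_ones)

theorem lemma3p6:
  fixes A :: "real^'n^'n" and \<alpha> :: real
  assumes "is_adjacency_matrix A"
    and "\<alpha> \<in> ev A"
    and "\<alpha> \<notin> {0, - real CARD('m), - 2 * real CARD('m)}"
  shows "(\<exists>(\<mu>::real) (f::real^'m) (g::real^'n).
            (J + \<alpha> *\<^sub>R mat 1) *v f = (\<mu> / 2) *\<^sub>R ones \<and>
            (A - J - \<alpha> *\<^sub>R mat 1) *v g = - ((\<mu> / 2) *\<^sub>R ones) \<and>
            f \<bullet> f + g \<bullet> g = 1 \<and>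
            ones \<bullet> f + ones \<bullet> g = 0)
         \<longleftrightarrow>
         (\<exists>g::real^'n. A *v g = \<alpha> *\<^sub>R g \<and> g \<bullet> g = 1 \<and> ones \<bullet> g = 0)"
proof
  assume "\<exists>g::real^'n. A *v g = \<alpha> *\<^sub>R g \<and> g \<bullet> g = 1 \<and> ones \<bullet> g = 0"
  then obtain g :: "real^'n" where g: "A *v g = \<alpha> *\<^sub>R g" "g \<bullet> g = 1" "ones \<bullet> g = 0" by blast
  have "(A - J - \<alpha> *\<^sub>R mat 1) *v g = - ((0 / 2) *\<^sub>R ones)"
    using g by (simp add: matrix_vector_mult_diff_rdistrib J_mult flip: scaleR_matrix_vector_assoc)
  moreover have "(J + \<alpha> *\<^sub>R mat 1) *v (0::real^'m) = (0 / 2) *\<^sub>R ones" by simp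
  ultimately show "\<exists>(\<mu>::real) (f::real^'m) (g::real^'n).
            (J + \<alpha> *\<^sub>R mat 1) *v f = (\<mu> / 2) *\<^sub>R ones \<and>
            (A - J - \<alpha> *\<^sub>R mat 1) *v g = - ((\<mu> / 2) *\<^sub>R ones) \<and>
            f \<bullet> f + g \<bullet> g = 1 \<and>
            ones \<bullet> f + ones \<bullet> g = 0" using g
    by (intro exI[of _ 0] exI[of _ "0::real^'m"] exI[of _ g]) simp
next
  assume "\<exists>(\<mu>::real) (f::real^'m) (g::real^'n).
            (J + \<alpha> *\<^sub>R mat 1) *v f = (\<mu> / 2) *\<^sub>R ones \<and>
            (A - J - \<alpha> *\<^sub>R mat 1) *v g = - ((\<mu> / 2) *\<^sub>R ones) \<and>
            f \<bullet> f + g \<bullet> g = 1 \<and>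
            ones \<bullet> f + ones \<bullet> g = 0"
  then obtain \<mu> and f :: "real^'m" and g :: "real^'n" where
    e1: "(J + \<alpha> *\<^sub>R mat 1) *v f = (\<mu> / 2) *\<^sub>R ones" and
    e2: "(A - J - \<alpha> *\<^sub>R mat 1) *v g = - ((\<mu> / 2) *\<^sub>R ones)" and
    e3: "f \<bullet> f + g \<bullet> g = 1" and e4: "ones \<bullet> f + ones \<bullet> g = 0" by blast
  define m where "m = real CARD('m)"
  define s where "s = ones \<bullet> f"
  define t where "t = ones \<bullet> g"
  have a0: "\<alpha> \<noteq> 0" and am: "\<alpha> + m \<noteq> 0" and a2m: "\<alpha> + 2 * m \<noteq> 0"
    using assms(3) unfolding m_def by auto
  have e1': "s *\<^sub>R ones + \<alpha> *\<^sub>R f = (\<mu> / 2) *\<^sub>R ones"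
    using e1 by (simp add: matrix_vector_mult_add_rdistrib J_mult s_def flip: scaleR_matrix_vector_assoc)
  have "(ones::real^'m) \<bullet> (s *\<^sub>R ones + \<alpha> *\<^sub>R f) = (ones::real^'m) \<bullet> ((\<mu> / 2) *\<^sub>R (ones::real^'m))" using e1' by (simp only:)
  hence s1: "s * m + \<alpha> * s = \<mu> / 2 * m"
    by (simp add: inner_add_right ones_ones m_def s_def)
  define c where "c = t - \<mu> / 2"
  have e2': "A *v g - \<alpha> *\<^sub>R g = c *\<^sub>R ones"
  proof -
    have "A *v g - t *\<^sub>R ones - \<alpha> *\<^sub>R g = - ((\<mu> / 2) *\<^sub>R ones)"
      using e2 by (simp add: matrix_vector_mult_diff_rdistrib J_mult t_def flip: scaleR_matrix_vector_assoc)
    thus ?thesis unfolding c_def by (simp add: algebra_simps)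
  qed
  have ts: "t = - s" using e4 unfolding s_def t_def by simp
  have cform: "2 * c * (\<alpha> + m) = - \<mu> * (\<alpha> + 2 * m)"
    using s1 ts unfolding c_def by (simp add: algebra_simps)
  show "\<exists>g::real^'n. A *v g = \<alpha> *\<^sub>R g \<and> g \<bullet> g = 1 \<and> ones \<bullet> g = 0"
  proof (cases "\<mu> = 0")
    case True
    have "s = 0" using s1 am True by (simp add: algebra_simps)
      (metis am add.commute distrib_left mult_eq_0_iff mult.commute)
    hence f0: "f = 0" using e1' a0 True by simp
    have "c = 0" using True ts \<open>s = 0\<close> unfolding c_def by simp
    thus ?thesis using e2' e3 ts \<open>s = 0\<close> f0 unfolding t_def by (intro exI[of _ g]) auto
  next
    case False
    have c0: "c \<noteq> 0" using cform False a2m by auto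
    obtain v :: "real^'n" where v: "v \<noteq> 0" "A *v v = \<alpha> *\<^sub>R v" using assms(2) unfolding ev_def by blast
    have tA: "transpose A = A" using assms(1) unfolding is_adjacency_matrix_def
      by (simp add: transpose_def vec_eq_iff)
    have sym: "(A *v g) \<bullet> v = g \<bullet> (A *v v)"
      by (metis dot_lmul_matrix tA vector_transpose_matrix)
    have "c * (ones \<bullet> v) = (A *v g - \<alpha> *\<^sub>R g) \<bullet> v" using e2' by simp
    also have "\<dots> = 0" using sym v(2) by (simp add: inner_diff_left inner_diff_right inner_commute)
    finally have ov: "ones \<bullet> v = 0" using c0 by simp
    define w where "w = (1 / norm v) *\<^sub>R v"
    have "w \<bullet> w = 1" using v(1) unfolding w_def
      by (simp add: power2_norm_eq_inner[symmetric] power2_eq_square)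
    moreover have "A *v w = \<alpha> *\<^sub>R w" unfolding w_def
      by (simp add: matrix_vector_mult_scaleR v(2))
    moreover have "ones \<bullet> w = 0" unfolding w_def using ov by simp
    ultimately show ?thesis by blast
  qed
qed

end
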